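(* Let $n\ge1$ and let $I\subseteq\Bbbk[x_0,\dots,x_n]$ be a saturated Borel ideal. Then $P_{\nabla(I)}=\nabla(P_I)$.
   Context: $\Bbbk$ is an algebraically closed field. For a homogeneous ideal $J$ of a polynomial ring $R$, $P_J$ is the Hilbert polynomial of $R/J$. A monomial ideal $I$ is Borel if for every monomial $m\in I$, every $x_j\mid m$ and every $i<j$, $mx_i/x_j\in I$; it is saturated if $(I:\langle x_0,\dots,x_n\rangle^\infty)=I$. For a saturated Borel ideal $I\subseteq\Bbbk[x_0,\dots,x_n]$, $\nabla(I)\subseteq\Bbbk[x_0,\dots,x_{n-1}]$ is the ideal generated by the image of $I$ under the $\Bbbk$-algebra map $\Bbbk[x_0,\dots,x_n]\to\Bbbk[x_0,\dots,x_{n-1}]$ with $x_j\mapsto x_j$ for $0\le j\le n-2$ and $x_{n-1},x_n\mapsto1$. For a polynomial $q\in\mathbb{Q}[t]$, $[\nabla(q)](t):=q(t)-q(t-1)$. *)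

theory Defs
  imports "HOL-Computational_Algebra.Polynomial"
begin

(* Monomials of k[x_0,...,x_n] are identified with their exponent vectors
  a :: nat => nat with a i = 0 for i > n.  A monomial ideal is identified with the
  set of monomials it contains (which determines it, and the monomials outside it
  form a k-basis of the quotient ring). *)

definition monoms :: "nat \<Rightarrow> (nat \<Rightarrow> nat) set" where
  "monoms n = {a. \<forall>i>n. a i = 0}"

definition mdeg :: "nat \<Rightarrow> (nat \<Rightarrow> nat) \<Rightarrow> nat" where
  "mdeg n a = (\<Sum>i\<le>n. a i)"

definition mdvd :: "(nat \<Rightarrow> nat) \<Rightarrow> (nat \<Rightarrow> nat) \<Rightarrow> bool" where
  "mdvd a b \<longleftrightarrow> (\<forall>i. a i \<le> b i)"

definition monomial_ideal :: "nat \<Rightarrow> (nat \<Rightarrow> nat) set \<Rightarrow> bool" where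
  "monomial_ideal n M \<longleftrightarrow> M \<subseteq> monoms n \<and>
     (\<forall>a\<in>M. \<forall>b\<in>monoms n. mdvd a b \<longrightarrow> b \<in> M)"

(* Borel: m in I, x_j | m, i < j  implies  m x_i / x_j in I. *)
definition borel :: "nat \<Rightarrow> (nat \<Rightarrow> nat) set \<Rightarrow> bool" where
  "borel n M \<longleftrightarrow> monomial_ideal n M \<and>
     (\<forall>a\<in>M. \<forall>i j. i < j \<and> j \<le> n \<and> 0 < a j \<longrightarrow> (a(j := a j - 1))(i := a i + 1) \<in> M)"

(* Monomials of the saturation (I : <x_0..x_n>^\ <infinity>): m with m * <x_0..x_n>^k \ <subseteq> I
  for some k. *)
definition saturation :: "nat \<Rightarrow> (nat \<Rightarrow> nat) set \<Rightarrow> (nat \<Rightarrow> nat) set" where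
  "saturation n M = {b \<in> monoms n. \<exists>k. \<forall>c\<in>monoms n. mdeg n c = k \<longrightarrow> (\<lambda>i. b i + c i) \<in> M}"

definition saturated :: "nat \<Rightarrow> (nat \<Rightarrow> nat) set \<Rightarrow> bool" where
  "saturated n M \<longleftrightarrow> saturation n M = M"

(* Image of a monomial under x_j \ <mapsto> x_j (j \ <le> n-2), x_{n-1}, x_n \ <mapsto> 1. *)
definition nabla_mono :: "nat \<Rightarrow> (nat \<Rightarrow> nat) \<Rightarrow> (nat \<Rightarrow> nat)" where
  "nabla_mono n a = (\<lambda>j. if j + 2 \<le> n then a j else 0)"

(* nabla(I): ideal of k[x_0..x_{n-1}] generated by the image of I (a monomial
  ideal, generated by the images of the monomials of I). *)
definition nabla :: "nat \<Rightarrow> (nat \<Rightarrow> nat) set \<Rightarrow> (nat \<Rightarrow> nat) set" where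
  "nabla n M = {b \<in> monoms (n - 1). \<exists>a\<in>M. mdvd (nabla_mono n a) b}"

definition hilb_fun :: "nat \<Rightarrow> (nat \<Rightarrow> nat) set \<Rightarrow> nat \<Rightarrow> nat" where
  "hilb_fun n M d = card {a \<in> monoms n. mdeg n a = d \<and> a \<notin> M}"

definition is_hilbert_poly :: "nat \<Rightarrow> (nat \<Rightarrow> nat) set \<Rightarrow> rat poly \<Rightarrow> bool" where
  "is_hilbert_poly n M p \<longleftrightarrow> (\<exists>d0. \<forall>d\<ge>d0. poly p (of_nat d) = of_nat (hilb_fun n M d))"

(* The Hilbert polynomial P_I (unique when it exists). *)
definition hilbert_poly :: "nat \<Rightarrow> (nat \<Rightarrow> nat) set \<Rightarrow> rat poly" where
  "hilbert_poly n M = (THE p. is_hilbert_poly n M p)"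

definition nabla_poly :: "rat poly \<Rightarrow> rat poly" where
  "nabla_poly q = q - pcompose q [:-1, 1:]"

end

theory Submission imports Defs begin

lemma mdeg_Suc: "mdeg (Suc m) a = mdeg m a + a (Suc m)"
  by (simp add: mdeg_def)

lemma mdeg_upd_out: "m < k \<Longrightarrow> mdeg m (a(k:=x)) = mdeg m a"
  unfolding mdeg_def by (intro sum.cong) auto

lemma mdeg_upd_last: "mdeg n (a(n := x)) + a n = mdeg n a + x"
  by (cases n) (simp_all add: mdeg_Suc mdeg_upd_out, simp add: mdeg_def)

lemma monomial_idealD: "monomial_ideal n M \<Longrightarrow> a \<in> M \<Longrightarrow> b \<in> monoms n \<Longrightarrow> mdvd a b \<Longrightarrow> b \<in> M"
  unfolding monomial_ideal_def by blast

lemma borel_mono: "borel n M \<Longrightarrow> monomial_ideal n M" by (simp add: borel_def)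

lemma borel_move: "borel n M \<Longrightarrow> a \<in> M \<Longrightarrow> i < j \<Longrightarrow> j \<le> n \<Longrightarrow> 0 < a j \<Longrightarrow> (a(j := a j - 1))(i := a i + 1) \<in> M"
  unfolding borel_def by blast

lemma mdeg_move:
  assumes "i < j" "j \<le> n" "0 < a j"
  shows "mdeg n ((a(j := a j - 1))(i := a i + 1)) = mdeg n a"
proof -
  let ?b = "(a(j := a j - 1))(i := a i + 1)"
  have pw: "?b x + (if x = j then 1 else 0) = a x + (if x = i then 1 else 0)" for x
    using assms by auto
  have "(\<Sum>x\<le>n. ?b x + (if x = j then 1 else 0)) = (\<Sum>x\<le>n. a x + (if x = i then 1 else 0))"
    using pw by simp
  hence "(\<Sum>x\<le>n. ?b x) + 1 = (\<Sum>x\<le>n. a x) + 1"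
    using assms by (simp add: sum.distrib)
  thus ?thesis by (simp add: mdeg_def)
qed

lemma monoms_move: "a \<in> monoms n \<Longrightarrow> i < j \<Longrightarrow> j \<le> n \<Longrightarrow> (a(j := a j - 1))(i := a i + 1) \<in> monoms n"
  by (simp add: monoms_def)

lemma lemmaD:
  assumes B: "borel n M" and m: "m \<le> n"
  shows "a \<in> M \<Longrightarrow> b \<in> monoms n \<Longrightarrow> (\<forall>i<m. a i \<le> b i) \<Longrightarrow> (\<forall>i>m. a i = b i)
     \<Longrightarrow> mdeg n a \<le> mdeg n b \<Longrightarrow> b \<in> M"
proof (induction "a m" arbitrary: a rule: less_induct)
  case less
  show ?case
  proof (cases "a m \<le> b m")
    case True
    have "mdvd a b" unfolding mdvd_def
    proof
      fix i show "a i \<le> b i" using less.prems True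
        by (cases "i < m"; cases "i = m"; auto)
    qed
    then show ?thesis using monomial_idealD[OF borel_mono[OF B] less.prems(1,2)] by blast
  next
    case False
    have "\<exists>i<m. a i < b i"
    proof (rule ccontr)
      assume "\<not> ?thesis"
      hence h: "\<forall>i<m. b i \<le> a i" by auto
      have "(\<Sum>i\<le>n. b i) < (\<Sum>i\<le>n. a i)"
      proof (rule sum_strict_mono_ex1)
        show "\<forall>x\<in>{..n}. b x \<le> a x" using h False less.prems(4)
          by (metis linorder_neqE_nat nle_le)
        show "\<exists>x\<in>{..n}. b x < a x" using False m by (intro bexI[of _ m]) auto
      qed simp
      thus False using less.prems(5) by (simp add: mdeg_def)
    qed
    then obtain i where i: "i < m" "a i < b i" by blast
    have am: "0 < a m" using False by simp
    define a' where "a' = (a(m := a m - 1))(i := a i + 1)"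
    have a'M: "a' \<in> M" unfolding a'_def using borel_move[OF B less.prems(1) i(1) m am] .
    have "a' m < a m" using i am unfolding a'_def by simp
    moreover have "\<forall>j<m. a' j \<le> b j" using less.prems(3) i unfolding a'_def by auto
    moreover have "\<forall>j>m. a' j = b j" using less.prems(4) i unfolding a'_def by auto
    moreover have "mdeg n a' \<le> mdeg n b" using mdeg_move[of i m n a, OF i(1) m am] less.prems(5) unfolding a'_def by simp
    ultimately show ?thesis using less.hyps[of a'] a'M less.prems(2) by blast
  qed
qed


lemma monoms_M: "borel n M \<Longrightarrow> a \<in> M \<Longrightarrow> a \<in> monoms n"
  unfolding borel_def monomial_ideal_def by blast

lemma lemmaS:
  assumes B: "borel n M" and S: "saturated n M" and a: "a \<in> M"
  shows "a(n := 0) \<in> M"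
proof -
  have am: "a \<in> monoms n" using monoms_M[OF B a] .
  have "a(n := 0) \<in> saturation n M"
    unfolding saturation_def
  proof (intro CollectI conjI exI[of _ "a n"] ballI impI)
    show "a(n := 0) \<in> monoms n" using am by (simp add: monoms_def)
    fix c assume c: "c \<in> monoms n" "mdeg n c = a n"
    let ?b = "\<lambda>i. (a(n := 0)) i + c i"
    show "?b \<in> M"
    proof (rule lemmaD[OF B order_refl a])
      show "?b \<in> monoms n" using am c by (simp add: monoms_def)
      show "\<forall>i<n. a i \<le> ?b i" by auto
      show "\<forall>i>n. a i = ?b i" using am c by (simp add: monoms_def)
      have "mdeg n ?b = mdeg n (a(n:=0)) + mdeg n c" by (simp add: mdeg_def sum.distrib)
      moreover have "mdeg n (a(n:=0)) + a n = mdeg n a"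
        using mdeg_upd_last[of n a 0] by simp
      ultimately show "mdeg n a \<le> mdeg n ?b" using c by simp
    qed
  qed
  thus ?thesis using S by (simp add: saturated_def)
qed

lemma nabla_monoms: "nabla n M \<subseteq> monoms (n - 1)" by (auto simp: nabla_def)

lemma mdvd_trans: "mdvd a b \<Longrightarrow> mdvd b c \<Longrightarrow> mdvd a c"
  unfolding mdvd_def using order_trans by blast

lemma nabla_borel:
  assumes B: "borel n M" and n: "n \<ge> 1"
  shows "borel (n - 1) (nabla n M)"
  unfolding borel_def monomial_ideal_def
proof (intro conjI ballI allI impI)
  show "nabla n M \<subseteq> monoms (n - 1)" by (rule nabla_monoms)
  fix a b assume "a \<in> nabla n M" "b \<in> monoms (n - 1)" "mdvd a b"
  then show "b \<in> nabla n M" unfolding nabla_def using mdvd_trans by blast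
next
  fix b i j assume b: "b \<in> nabla n M" and ij: "i < j \<and> j \<le> n - 1 \<and> 0 < b j"
  let ?b = "(b(j := b j - 1))(i := b i + 1)"
  from b obtain a where a: "a \<in> M" "mdvd (nabla_mono n a) b" and bm: "b \<in> monoms (n - 1)"
    unfolding nabla_def by blast
  have bm': "?b \<in> monoms (n - 1)" using bm ij by (simp add: monoms_def)
  show "?b \<in> nabla n M"
  proof (cases "nabla_mono n a j < b j")
    case True
    have "mdvd (nabla_mono n a) ?b" unfolding mdvd_def
    proof
      fix x show "nabla_mono n a x \<le> ?b x"
        using a(2)[unfolded mdvd_def, rule_format, of x] True ij by (cases "x = i"; cases "x = j") auto
    qed
    then show ?thesis using bm' a(1) unfolding nabla_def by blast
  next
    case False
    hence eq: "nabla_mono n a j = b j" using a(2) unfolding mdvd_def by (meson le_neq_implies_less)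
    hence jn: "j + 2 \<le> n" and aj: "a j = b j" using ij by (auto simp: nabla_mono_def split: if_splits)
    define a' where "a' = (a(j := a j - 1))(i := a i + 1)"
    have a'M: "a' \<in> M" unfolding a'_def using borel_move[OF B a(1), of i j] ij jn aj by auto
    have "mdvd (nabla_mono n a') ?b" unfolding mdvd_def
    proof
      fix x show "nabla_mono n a' x \<le> ?b x"
        using a(2)[unfolded mdvd_def, rule_format, of x] ij jn aj unfolding a'_def
        by (cases "x = i"; cases "x = j") (auto simp: nabla_mono_def)
    qed
    then show ?thesis using bm' a'M unfolding nabla_def by blast
  qed
qed

lemma nabla_saturated:
  assumes B: "borel n M" and n: "n \<ge> 1"
  shows "saturated (n - 1) (nabla n M)"
  unfolding saturated_def
proof
  show "saturation (n - 1) (nabla n M) \<subseteq> nabla n M"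
  proof
    fix b assume "b \<in> saturation (n - 1) (nabla n M)"
    then obtain k where bm: "b \<in> monoms (n - 1)" and
      k: "\<forall>c\<in>monoms (n - 1). mdeg (n - 1) c = k \<longrightarrow> (\<lambda>i. b i + c i) \<in> nabla n M"
      unfolding saturation_def by blast
    define c where "c = (\<lambda>i. if i = n - 1 then k else (0::nat))"
    have "c \<in> monoms (n - 1)" by (simp add: c_def monoms_def)
    moreover have "mdeg (n - 1) c = k" by (simp add: c_def mdeg_def)
    ultimately have "(\<lambda>i. b i + c i) \<in> nabla n M" using k by blast
    then obtain a where a: "a \<in> M" "mdvd (nabla_mono n a) (\<lambda>i. b i + c i)"
      unfolding nabla_def by blast
    have "mdvd (nabla_mono n a) b" unfolding mdvd_def
    proof
      fix x show "nabla_mono n a x \<le> b x"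
        using a(2)[unfolded mdvd_def, rule_format, of x] n
        by (cases "x = n - 1") (auto simp: nabla_mono_def c_def)
    qed
    then show "b \<in> nabla n M" using a(1) bm unfolding nabla_def by blast
  qed
next
  show "nabla n M \<subseteq> saturation (n - 1) (nabla n M)"
  proof
    fix b assume b: "b \<in> nabla n M"
    have "\<forall>c\<in>monoms (n - 1). mdeg (n - 1) c = 0 \<longrightarrow> (\<lambda>i. b i + c i) \<in> nabla n M"
    proof (intro ballI impI)
      fix c assume c: "c \<in> monoms (n - 1)" "mdeg (n - 1) c = 0"
      have "c = (\<lambda>_. 0)"
      proof
        fix i show "c i = 0" using c by (cases "i \<le> n - 1") (auto simp: monoms_def mdeg_def)
      qed
      then show "(\<lambda>i. b i + c i) \<in> nabla n M" using b by simp
    qed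
    then show "b \<in> saturation (n - 1) (nabla n M)" using b nabla_monoms
      unfolding saturation_def by blast
  qed
qed


lemma dickson:
  "\<forall>S. S \<subseteq> {a. \<forall>i\<ge>k. a i = 0} \<longrightarrow> (\<exists>F. finite F \<and> F \<subseteq> S \<and> (\<forall>s\<in>S. \<exists>f\<in>F. mdvd f s))"
proof (induction k)
  case 0
  show ?case
  proof (intro allI impI)
    fix S :: "(nat \<Rightarrow> nat) set" assume "S \<subseteq> {a. \<forall>i\<ge>0. a i = 0}"
    hence "S \<subseteq> {\<lambda>_. 0}" by auto
    hence "finite S" using finite_subset by blast
    moreover have "\<forall>s\<in>S. \<exists>f\<in>S. mdvd f s" by (auto simp: mdvd_def)
    ultimately show "\<exists>F. finite F \<and> F \<subseteq> S \<and> (\<forall>s\<in>S. \<exists>f\<in>F. mdvd f s)" by blast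
  qed
next
  case (Suc k)
  show ?case
  proof (intro allI impI)
    fix S :: "(nat \<Rightarrow> nat) set" assume S: "S \<subseteq> {a. \<forall>i\<ge>Suc k. a i = 0}"
    define proj :: "(nat \<Rightarrow> nat) \<Rightarrow> (nat \<Rightarrow> nat)" where "proj a = a(k := 0)" for a
    have projS: "proj ` T \<subseteq> {a. \<forall>i\<ge>k. a i = 0}" if T: "T \<subseteq> S" for T
    proof (intro subsetI CollectI allI impI)
      fix y i assume "y \<in> proj ` T" "k \<le> i"
      then obtain x where x: "x \<in> S" "y = proj x" using T by blast
      show "y i = 0"
      proof (cases "i = k")
        case False
        hence "Suc k \<le> i" using \<open>k \<le> i\<close> by simp
        then show ?thesis using x S False by (auto simp: proj_def)
      qed (simp add: x proj_def)
    qed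
    obtain F' where F': "finite F'" "F' \<subseteq> proj ` S" "\<forall>s\<in>proj ` S. \<exists>f\<in>F'. mdvd f s"
      using Suc.IH projS[of S] by (meson order_refl)
    have "\<forall>v. \<exists>F. finite F \<and> F \<subseteq> proj ` {s\<in>S. s k = v} \<and> (\<forall>s\<in>proj ` {s\<in>S. s k = v}. \<exists>f\<in>F. mdvd f s)"
    proof
      fix v
      have "proj ` {s\<in>S. s k = v} \<subseteq> {a. \<forall>i\<ge>k. a i = 0}" by (rule projS) auto
      then show "\<exists>F. finite F \<and> F \<subseteq> proj ` {s\<in>S. s k = v} \<and> (\<forall>s\<in>proj ` {s\<in>S. s k = v}. \<exists>f\<in>F. mdvd f s)"
        using Suc.IH by (elim allE impE)
    qed
    from choice[OF this] obtain Fv where Fv0: "\<forall>v. finite (Fv v) \<and> Fv v \<subseteq> proj ` {s\<in>S. s k = v} \<and>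
      (\<forall>s\<in>proj ` {s\<in>S. s k = v}. \<exists>f\<in>Fv v. mdvd f s)" by (elim exE)
    have Fv: "\<And>v. finite (Fv v)" "\<And>v. Fv v \<subseteq> proj ` {s\<in>S. s k = v}"
      "\<And>v. \<forall>s\<in>proj ` {s\<in>S. s k = v}. \<exists>f\<in>Fv v. mdvd f s"
      using Fv0 by blast+
    define l where "l f = (SOME s. s \<in> S \<and> proj s = f)" for f
    have l: "l f \<in> S \<and> proj (l f) = f" if "f \<in> F'" for f
    proof -
      have "\<exists>s. s \<in> S \<and> proj s = f" using F'(2) that by blast
      then show ?thesis unfolding l_def by (rule someI_ex)
    qed
    define K where "K = Max (insert 0 ((\<lambda>f. l f k) ` F'))"
    have K: "l f k \<le> K" if "f \<in> F'" for f
      unfolding K_def using F'(1) that by (intro Max_ge) auto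
    define G where "G v = {s \<in> S. s k = v \<and> proj s \<in> Fv v}" for v
    have injv: "inj_on proj {s. s k = v}" for v
    proof (rule inj_onI)
      fix x y assume "x \<in> {s. s k = v}" "y \<in> {s. s k = v}" "proj x = proj y"
      show "x = y"
      proof
        fix i show "x i = y i"
        proof (cases "i = k")
          case False
          then show ?thesis using fun_cong[OF \<open>proj x = proj y\<close>, of i] by (simp add: proj_def)
        qed (use \<open>x \<in> _\<close> \<open>y \<in> _\<close> in simp)
      qed
    qed
    have finG: "finite (G v)" for v
    proof -
      have "G v \<subseteq> {s. s k = v} \<inter> proj -` Fv v" unfolding G_def by auto
      moreover have "finite ({s. s k = v} \<inter> proj -` Fv v)"
        using finite_vimage_IntI[OF Fv(1) injv] by (simp add: Int_commute)
      ultimately show ?thesis using finite_subset by blast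
    qed
    define F where "F = l ` F' \<union> (\<Union>v<K. G v)"
    have "finite F" unfolding F_def using F'(1) finG by auto
    moreover have "F \<subseteq> S" unfolding F_def G_def using l by auto
    moreover have "\<forall>s\<in>S. \<exists>f\<in>F. mdvd f s"
    proof
      fix s assume s: "s \<in> S"
      show "\<exists>f\<in>F. mdvd f s"
      proof (cases "K \<le> s k")
        case True
        obtain f where f: "f \<in> F'" "mdvd f (proj s)" using F'(3) s by blast
        have "mdvd (l f) s" unfolding mdvd_def
        proof
          fix i show "l f i \<le> s i"
          proof (cases "i = k")
            case True then show ?thesis using K[OF f(1)] \<open>K \<le> s k\<close> by simp
          next
            case False
            have "proj (l f) i \<le> proj s i" using l[OF f(1)] f(2) by (simp add: mdvd_def)
            then show ?thesis using False by (simp add: proj_def)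
          qed
        qed
        then show ?thesis using f(1) unfolding F_def by blast
      next
        case False
        have "proj s \<in> proj ` {t\<in>S. t k = s k}" using s by blast
        then obtain f where f: "f \<in> Fv (s k)" "mdvd f (proj s)" using Fv(3) by blast
        then obtain t where t: "t \<in> S" "t k = s k" "proj t = f" using Fv(2) by blast
        have "t \<in> G (s k)" unfolding G_def using t f by simp
        hence "t \<in> F" unfolding F_def using False by auto
        moreover have "mdvd t s" unfolding mdvd_def
        proof
          fix i show "t i \<le> s i"
          proof (cases "i = k")
            case True then show ?thesis using t by simp
          next
            case False
            have "proj t i \<le> proj s i" using t f(2) by (simp add: mdvd_def)
            then show ?thesis using False by (simp add: proj_def)
          qed
        qed
        ultimately show ?thesis by blast
      qed
    qed
    ultimately show "\<exists>F. finite F \<and> F \<subseteq> S \<and> (\<forall>s\<in>S. \<exists>f\<in>F. mdvd f s)" by blast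
  qed
qed


lemma mdeg_n_eq: "n \<ge> 1 \<Longrightarrow> a n = 0 \<Longrightarrow> mdeg n a = mdeg (n - 1) a"
  by (cases n) (simp_all add: mdeg_Suc)

lemma monoms_n1: "n \<ge> 1 \<Longrightarrow> (a \<in> monoms (n - 1)) = (a \<in> monoms n \<and> a n = 0)"
proof
  assume n: "n \<ge> 1" and a: "a \<in> monoms (n - 1)"
  then show "a \<in> monoms n \<and> a n = 0" by (simp add: monoms_def)
next
  assume n: "n \<ge> 1" and a: "a \<in> monoms n \<and> a n = 0"
  show "a \<in> monoms (n - 1)" unfolding monoms_def
  proof (intro CollectI allI impI)
    fix i assume "n - 1 < i"
    then have "i = n \<or> i > n" using n by linarith
    then show "a i = 0" using a by (auto simp: monoms_def)
  qed
qed

lemma boundA: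
  assumes B: "borel n M" and S: "saturated n M" and n: "n \<ge> 1"
  shows "\<exists>D. \<forall>b\<in>nabla n M. D \<le> mdeg (n - 1) b \<longrightarrow> b \<in> M"
proof -
  have "M \<subseteq> {a. \<forall>i\<ge>Suc n. a i = 0}" using monoms_M[OF B] by (auto simp: monoms_def)
  then obtain F where F: "finite F" "F \<subseteq> M" "\<forall>s\<in>M. \<exists>f\<in>F. mdvd f s"
    using dickson[of "Suc n", rule_format, of M] by blast
  define D where "D = Max (insert 0 (mdeg n ` F))"
  have D: "mdeg n f \<le> D" if "f \<in> F" for f
    unfolding D_def using F(1) that by (intro Max_ge) auto
  show ?thesis
  proof (intro exI ballI impI)
    fix b assume b: "b \<in> nabla n M" and bd: "D \<le> mdeg (n - 1) b"
    from b obtain a where a: "a \<in> M" "mdvd (nabla_mono n a) b" and bm: "b \<in> monoms (n - 1)"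
      unfolding nabla_def by blast
    obtain f where f: "f \<in> F" "mdvd f a" using F(3) a(1) by blast
    have fM: "f \<in> M" using f F(2) by blast
    have fm: "f \<in> monoms n" using monoms_M[OF B fM] .
    have bn: "b \<in> monoms n" "b n = 0" using bm monoms_n1[OF n] by auto
    show "b \<in> M"
    proof (rule lemmaD[OF B _ lemmaS[OF B S fM] bn(1)])
      show "n - 1 \<le> n" by simp
      show "\<forall>i<n - 1. (f(n := 0)) i \<le> b i"
      proof (intro allI impI)
        fix i assume i: "i < n - 1"
        have "f i \<le> a i" using f(2) by (simp add: mdvd_def)
        also have "a i = nabla_mono n a i" using i by (simp add: nabla_mono_def)
        also have "\<dots> \<le> b i" using a(2) by (simp add: mdvd_def)
        finally show "(f(n := 0)) i \<le> b i" using i by simp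
      qed
      show "\<forall>i>n - 1. (f(n := 0)) i = b i"
      proof (intro allI impI)
        fix i assume i: "n - 1 < i"
        show "(f(n := 0)) i = b i"
        proof (cases "i = n")
          case True then show ?thesis using bn by simp
        next
          case False
          hence "i > n" using i by simp
          then show ?thesis using fm bn by (simp add: monoms_def)
        qed
      qed
      have "mdeg n (f(n:=0)) \<le> mdeg n f" using mdeg_upd_last[of n f 0] by simp
      also have "\<dots> \<le> D" using D[OF f(1)] .
      also have "\<dots> \<le> mdeg n b" using bd mdeg_n_eq[of n b, OF n bn(2)] by simp
      finally show "mdeg n (f(n := 0)) \<le> mdeg n b" .
    qed
  qed
qed

lemma finite_deg: "finite {a \<in> monoms n. mdeg n a = d}"
proof -
  have "{a \<in> monoms n. mdeg n a = d} \<subseteq> {f. \<forall>x. (x \<in> {..n} \<longrightarrow> f x \<in> {..d}) \<and> (x \<notin> {..n} \<longrightarrow> f x = 0)}"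
  proof (intro subsetI CollectI allI conjI impI)
    fix a x assume a: "a \<in> {a \<in> monoms n. mdeg n a = d}"
    { assume x: "x \<in> {..n}"
      have "a x \<le> (\<Sum>i\<le>n. a i)" using x by (intro member_le_sum) auto
      then show "a x \<in> {..d}" using a by (simp add: mdeg_def) }
    { assume "x \<notin> {..n}" then show "a x = 0" using a by (simp add: monoms_def) }
  qed
  moreover have "finite {f. \<forall>x. (x \<in> {..n} \<longrightarrow> f x \<in> {..d}) \<and> (x \<notin> {..n} \<longrightarrow> f x = (0::nat))}"
    by (intro finite_set_of_finite_funs) auto
  ultimately show ?thesis using finite_subset by blast
qed


lemma mdvd_nabla_mono: "mdvd (nabla_mono n a) a"
  by (simp add: mdvd_def nabla_mono_def)

lemma up_notin:
  assumes B: "borel n M" and S: "saturated n M" and a: "a \<in> monoms n" "a \<notin> M"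
  shows "a(n := Suc (a n)) \<notin> M"
proof
  assume "a(n := Suc (a n)) \<in> M"
  from lemmaS[OF B S this] have "a(n := 0) \<in> M" by simp
  moreover have "mdvd (a(n := 0)) a" by (simp add: mdvd_def)
  ultimately have "a \<in> M" using monomial_idealD[OF borel_mono[OF B] _ a(1)] by blast
  with a(2) show False by blast
qed

lemma core:
  assumes B: "borel n M" and S: "saturated n M" and n: "n \<ge> 1"
  shows "\<exists>D\<ge>1. \<forall>d\<ge>D. hilb_fun n M d = hilb_fun n M (d - 1) + hilb_fun (n - 1) (nabla n M) d"
proof -
  obtain D0 where D0: "\<forall>b\<in>nabla n M. D0 \<le> mdeg (n - 1) b \<longrightarrow> b \<in> M"
    using boundA[OF B S n] by blast
  define T where "T m N d = {a \<in> monoms m. mdeg m a = d \<and> a \<notin> N}" for m N d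
  have finT: "finite (T m N d)" for m N d
    using finite_deg[of m d] unfolding T_def by (rule finite_subset[rotated]) auto
  define up where "up a = a(n := Suc (a n))" for a :: "nat \<Rightarrow> nat"
  have mdeg_up: "mdeg n (up a) = Suc (mdeg n a)" for a
    using mdeg_upd_last[of n a "Suc (a n)"] unfolding up_def by simp
  show ?thesis
  proof (intro exI[of _ "max D0 1"] conjI allI impI)
    fix d assume d: "max D0 1 \<le> d"
    have A1: "{a \<in> T n M d. a n = 0} = T (n - 1) (nabla n M) d"
    proof (intro set_eqI iffI)
      fix a assume a: "a \<in> {a \<in> T n M d. a n = 0}"
      hence am: "a \<in> monoms (n - 1)" and ad: "mdeg (n - 1) a = d" and aM: "a \<notin> M"
        using monoms_n1[OF n] mdeg_n_eq[OF n, of a] unfolding T_def by auto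
      have "a \<notin> nabla n M" using D0 ad d aM by auto
      then show "a \<in> T (n - 1) (nabla n M) d" using am ad unfolding T_def by simp
    next
      fix a assume a: "a \<in> T (n - 1) (nabla n M) d"
      hence am: "a \<in> monoms n" "a n = 0" and ad: "mdeg (n - 1) a = d" and aN: "a \<notin> nabla n M"
        using monoms_n1[OF n] unfolding T_def by auto
      have "a \<notin> M"
      proof
        assume "a \<in> M"
        then have "a \<in> nabla n M" using mdvd_nabla_mono[of n a] a monoms_n1[OF n] am
          unfolding nabla_def T_def by blast
        with aN show False by blast
      qed
      then show "a \<in> {a \<in> T n M d. a n = 0}" using am ad mdeg_n_eq[OF n, of a] unfolding T_def by simp
    qed
    have A2: "{a \<in> T n M d. a n \<noteq> 0} = up ` T n M (d - 1)"
    proof (intro set_eqI iffI)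
      fix a assume a: "a \<in> {a \<in> T n M d. a n \<noteq> 0}"
      define b where "b = a(n := a n - 1)"
      have ab: "a = up b" using a unfolding up_def b_def by auto
      have bm: "b \<in> monoms n" using a unfolding T_def b_def by (simp add: monoms_def)
      have "mdeg n b = d - 1" using mdeg_up[of b] ab a unfolding T_def by auto
      moreover have "b \<notin> M"
      proof
        assume "b \<in> M"
        moreover have "mdvd b a" unfolding b_def mdvd_def by simp
        ultimately have "a \<in> M" using monomial_idealD[OF borel_mono[OF B]] a unfolding T_def by blast
        with a show False unfolding T_def by blast
      qed
      ultimately have "b \<in> T n M (d - 1)" using bm unfolding T_def by simp
      then show "a \<in> up ` T n M (d - 1)" using ab by blast
    next
      fix a assume "a \<in> up ` T n M (d - 1)"
      then obtain b where b: "b \<in> T n M (d - 1)" "a = up b" by blast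
      have "up b \<in> monoms n" using b unfolding T_def up_def by (simp add: monoms_def)
      moreover have "mdeg n (up b) = d" using mdeg_up[of b] b d unfolding T_def by simp
      moreover have "up b \<notin> M" using up_notin[OF B S, of b] b unfolding T_def up_def by simp
      ultimately show "a \<in> {a \<in> T n M d. a n \<noteq> 0}" using b unfolding T_def up_def by simp
    qed
    have inj: "inj_on up (T n M (d - 1))"
    proof (rule inj_onI)
      fix x y assume "up x = up y"
      then show "x = y" unfolding up_def
        by (metis fun_upd_idem_iff fun_upd_upd nat.inject fun_upd_same)
    qed
    have "T n M d = {a \<in> T n M d. a n = 0} \<union> {a \<in> T n M d. a n \<noteq> 0}" by blast
    hence "card (T n M d) = card {a \<in> T n M d. a n = 0} + card {a \<in> T n M d. a n \<noteq> 0}"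
      using finT[of n M d] by (metis (no_types, lifting) card_Un_disjoint disjoint_iff finite_Un mem_Collect_eq)
    also have "\<dots> = card (T (n - 1) (nabla n M) d) + card (T n M (d - 1))"
      using A1 A2 card_image[OF inj] by simp
    finally show "hilb_fun n M d = hilb_fun n M (d - 1) + hilb_fun (n - 1) (nabla n M) d"
      unfolding hilb_fun_def T_def by simp
  qed simp
qed


lemma binom_diff:
  fixes x :: rat
  shows "x ^ Suc k - (x - 1) ^ Suc k =
    of_nat (Suc k) * x ^ k - (\<Sum>j<k. of_nat (Suc k choose j) * (-1) ^ (Suc k - j) * x ^ j)"
proof -
  have "(x - 1) ^ Suc k = (x + (-1)) ^ Suc k" by simp
  also have "\<dots> = (\<Sum>j\<le>Suc k. of_nat (Suc k choose j) * x ^ j * (-1) ^ (Suc k - j))"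
    by (rule binomial_ring)
  also have "\<dots> = (\<Sum>j<k. of_nat (Suc k choose j) * x ^ j * (-1) ^ (Suc k - j))
      - of_nat (Suc k) * x ^ k + x ^ Suc k"
    by (simp add: lessThan_Suc_atMost[symmetric])
  finally show ?thesis by (simp add: algebra_simps)
qed

lemma anti_pow: "\<exists>S :: rat poly. \<forall>x. poly S x - poly S (x - 1) = x ^ k"
proof (induction k rule: less_induct)
  case (less k)
  have "\<forall>j. \<exists>S :: rat poly. j < k \<longrightarrow> (\<forall>x. poly S x - poly S (x - 1) = x ^ j)"
    using less by blast
  from choice[OF this] obtain Sf :: "nat \<Rightarrow> rat poly" where Sf0: "\<forall>j<k. \<forall>x. poly (Sf j) x - poly (Sf j) (x - 1) = x ^ j"
    by blast
  have Sf: "\<And>j x. j < k \<Longrightarrow> poly (Sf j) x - poly (Sf j) (x - 1) = x ^ j" using Sf0 by blast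
  define c :: "nat \<Rightarrow> rat" where "c j = of_nat (Suc k choose j) * (-1) ^ (Suc k - j)" for j
  define S where "S = smult (1 / of_nat (Suc k)) (monom 1 (Suc k) + (\<Sum>j<k. smult (c j) (Sf j)))"
  show ?case
  proof (intro exI[of _ S] allI)
    fix x :: rat
    have "poly S x - poly S (x - 1) = (1 / of_nat (Suc k)) *
       ((x ^ Suc k - (x - 1) ^ Suc k) + (\<Sum>j<k. c j * (poly (Sf j) x - poly (Sf j) (x - 1))))"
      unfolding S_def by (simp add: poly_monom poly_sum algebra_simps sum_subtractf[symmetric] sum_distrib_left)
    also have "(\<Sum>j<k. c j * (poly (Sf j) x - poly (Sf j) (x - 1))) = (\<Sum>j<k. c j * x ^ j)"
      using Sf by simp
    also have "x ^ Suc k - (x - 1) ^ Suc k = of_nat (Suc k) * x ^ k - (\<Sum>j<k. c j * x ^ j)"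
      unfolding c_def by (rule binom_diff)
    finally show "poly S x - poly S (x - 1) = x ^ k" by simp
  qed
qed

lemma anti_poly: "\<exists>S :: rat poly. \<forall>x. poly S x - poly S (x - 1) = poly Q x"
proof -
  have "\<forall>k. \<exists>S :: rat poly. \<forall>x. poly S x - poly S (x - 1) = x ^ k" using anti_pow by blast
  from choice[OF this] obtain Sp :: "nat \<Rightarrow> rat poly" where Sp0: "\<forall>k x. poly (Sp k) x - poly (Sp k) (x - 1) = x ^ k" by blast
  have Sp: "\<And>k x. poly (Sp k) x - poly (Sp k) (x - 1) = x ^ k" using Sp0 by blast
  define S where "S = (\<Sum>i\<le>degree Q. smult (coeff Q i) (Sp i))"
  show ?thesis
  proof (intro exI[of _ S] allI)
    fix x
    have "poly S x - poly S (x - 1) = (\<Sum>i\<le>degree Q. coeff Q i * (poly (Sp i) x - poly (Sp i) (x - 1)))"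
      unfolding S_def by (simp add: poly_sum algebra_simps sum_subtractf)
    also have "\<dots> = (\<Sum>i\<le>degree Q. coeff Q i * x ^ i)" using Sp by simp
    also have "\<dots> = poly Q x" by (simp add: poly_altdef)
    finally show "poly S x - poly S (x - 1) = poly Q x" .
  qed
qed

lemma hp_unique:
  assumes "is_hilbert_poly m N p" "is_hilbert_poly m N q"
  shows "p = q"
proof (rule ccontr)
  assume ne: "p \<noteq> q"
  obtain d1 where d1: "\<forall>d\<ge>d1. poly p (of_nat d) = of_nat (hilb_fun m N d)"
    using assms(1) unfolding is_hilbert_poly_def by blast
  obtain d2 where d2: "\<forall>d\<ge>d2. poly q (of_nat d) = of_nat (hilb_fun m N d)"
    using assms(2) unfolding is_hilbert_poly_def by blast
  have "p - q \<noteq> 0" using ne by simp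
  hence fin: "finite {x. poly (p - q) x = 0}" by (rule poly_roots_finite)
  have "of_nat ` {max d1 d2..} \<subseteq> {x. poly (p - q) x = 0}" using d1 d2 by auto
  hence "finite (of_nat ` {max d1 d2..} :: rat set)" using fin finite_subset by blast
  hence "finite {max d1 d2..}" by (rule finite_imageD) (simp add: inj_on_def)
  thus False using infinite_Ici by blast
qed

lemma hp_the: "is_hilbert_poly m N p \<Longrightarrow> hilbert_poly m N = p"
  unfolding hilbert_poly_def using hp_unique by blast


lemma exist0:
  assumes B: "borel 0 M"
  shows "\<exists>p. is_hilbert_poly 0 M p"
proof -
  define e :: "nat \<Rightarrow> nat \<Rightarrow> nat" where "e d = (\<lambda>i. if i = 0 then d else 0)" for d
  have set: "{a \<in> monoms 0. mdeg 0 a = d \<and> a \<notin> M} = (if e d \<in> M then {} else {e d})" for d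
  proof -
    have eq: "a \<in> monoms 0 \<and> mdeg 0 a = d \<longleftrightarrow> a = e d" for a
    proof
      assume a: "a \<in> monoms 0 \<and> mdeg 0 a = d"
      show "a = e d"
      proof
        fix i show "a i = e d i" using a by (cases "i = 0") (auto simp: e_def monoms_def mdeg_def)
      qed
    qed (auto simp: e_def monoms_def mdeg_def)
    show ?thesis
    proof (cases "e d \<in> M")
      case True
      have "{a \<in> monoms 0. mdeg 0 a = d \<and> a \<notin> M} = {}"
      proof (intro equals0I)
        fix x assume x: "x \<in> {a \<in> monoms 0. mdeg 0 a = d \<and> a \<notin> M}"
        then have "x = e d" using eq[of x] by simp
        then show False using x True by simp
      qed
      then show ?thesis using True by simp
    next
      case False
      have "{a \<in> monoms 0. mdeg 0 a = d \<and> a \<notin> M} = {e d}"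
      proof (intro set_eqI iffI)
        fix x assume x: "x \<in> {a \<in> monoms 0. mdeg 0 a = d \<and> a \<notin> M}"
        then have "x = e d" using eq[of x] by simp
        then show "x \<in> {e d}" by simp
      next
        fix x assume "x \<in> {e d}"
        then show "x \<in> {a \<in> monoms 0. mdeg 0 a = d \<and> a \<notin> M}" using eq[of x] False by simp
      qed
      then show ?thesis using False by simp
    qed
  qed
  show ?thesis
  proof (cases "M = {}")
    case True
    have "poly [:1:] (of_nat d) = (of_nat (hilb_fun 0 M d) :: rat)" for d
      unfolding hilb_fun_def set using True by simp
    then show ?thesis unfolding is_hilbert_poly_def by blast
  next
    case False
    then obtain a where a: "a \<in> M" by blast
    have am: "a \<in> monoms 0" using monoms_M[OF B a] .
    have "poly 0 (of_nat d) = (of_nat (hilb_fun 0 M d) :: rat)" if d: "d \<ge> a 0" for d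
    proof -
      have "mdvd a (e d)" unfolding mdvd_def
      proof
        fix i show "a i \<le> e d i" using am d by (cases "i = 0") (auto simp: e_def monoms_def)
      qed
      moreover have "e d \<in> monoms 0" by (simp add: e_def monoms_def)
      ultimately have "e d \<in> M" using monomial_idealD[OF borel_mono[OF B] a] by blast
      then show ?thesis unfolding hilb_fun_def set by simp
    qed
    then show ?thesis unfolding is_hilbert_poly_def by blast
  qed
qed

lemma exist: "borel n M \<Longrightarrow> saturated n M \<Longrightarrow> \<exists>p. is_hilbert_poly n M p"
proof (induction n arbitrary: M)
  case 0
  then show ?case using exist0 by blast
next
  case (Suc m)
  have n: "Suc m \<ge> 1" by simp
  obtain D where D: "D \<ge> 1" "\<forall>d\<ge>D. hilb_fun (Suc m) M d = hilb_fun (Suc m) M (d - 1) + hilb_fun m (nabla (Suc m) M) d"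
    using core[OF Suc.prems n] by auto
  obtain Q d0 where Q: "\<forall>d\<ge>d0. poly Q (of_nat d) = (of_nat (hilb_fun m (nabla (Suc m) M) d) :: rat)"
    using Suc.IH[of "nabla (Suc m) M"] nabla_borel[OF Suc.prems(1) n] nabla_saturated[OF Suc.prems(1) n]
    unfolding is_hilbert_poly_def by auto
  obtain S where S: "\<forall>x. poly S x - poly S (x - 1) = poly Q x" using anti_poly by blast
  define D1 where "D1 = max D d0"
  define h where "h d = (of_nat (hilb_fun (Suc m) M d) :: rat)" for d
  have rec: "h d = h (d - 1) + poly Q (of_nat d)" if "d \<ge> D1" for d
    using D(2) Q that unfolding h_def D1_def by simp
  define c where "c = h (D1 - 1) - poly S (of_nat (D1 - 1))"
  define p where "p = S + [:c:]"
  have "poly p (of_nat d) = h d" if "D1 - 1 \<le> d" for d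
    using that
  proof (induction d rule: dec_induct)
    case base
    then show ?case unfolding p_def c_def by simp
  next
    case (step d)
    have "D1 \<le> Suc d" using step by simp
    hence "h (Suc d) = h d + poly Q (of_nat (Suc d))" using rec[of "Suc d"] by simp
    also have "poly Q (of_nat (Suc d)) = poly S (of_nat (Suc d)) - poly S (of_nat d)"
      using S[rule_format, of "of_nat (Suc d)"] by simp
    finally show ?case using step.IH unfolding p_def by simp
  qed
  then show ?case unfolding is_hilbert_poly_def h_def by blast
qed

theorem lemma5p7:
  fixes n :: nat and M :: "(nat \<Rightarrow> nat) set"
  assumes "n \<ge> 1" and "borel n M" and "saturated n M"
  shows "hilbert_poly (n - 1) (nabla n M) = nabla_poly (hilbert_poly n M)"
proof -
  obtain P where P: "is_hilbert_poly n M P" using exist[OF assms(2,3)] by blast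
  then obtain d0 where d0: "\<forall>d\<ge>d0. poly P (of_nat d) = of_nat (hilb_fun n M d)"
    unfolding is_hilbert_poly_def by blast
  obtain D where D: "D \<ge> 1" "\<forall>d\<ge>D. hilb_fun n M d = hilb_fun n M (d - 1) + hilb_fun (n - 1) (nabla n M) d"
    using core[OF assms(2,3,1)] by auto
  have "is_hilbert_poly (n - 1) (nabla n M) (nabla_poly P)"
    unfolding is_hilbert_poly_def
  proof (intro exI[of _ "max D (Suc d0)"] allI impI)
    fix d assume d: "max D (Suc d0) \<le> d"
    have "poly (nabla_poly P) (of_nat d) = poly P (of_nat d) - poly P (of_nat (d - 1))"
      using d by (simp add: nabla_poly_def poly_pcompose of_nat_diff)
    also have "\<dots> = of_nat (hilb_fun n M d) - of_nat (hilb_fun n M (d - 1))"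
    proof -
      have e1: "poly P (of_nat d) = of_nat (hilb_fun n M d)" using d0 d by simp
      have "d0 \<le> d - 1" using d by linarith
      from d0[rule_format, OF this] have e2: "poly P (of_nat (d - 1)) = of_nat (hilb_fun n M (d - 1))" .
      show ?thesis by (simp only: e1 e2)
    qed
    also have "\<dots> = of_nat (hilb_fun (n - 1) (nabla n M) d)"
      using D(2) d by simp
    finally show "poly (nabla_poly P) (of_nat d) = of_nat (hilb_fun (n - 1) (nabla n M) d)" .
  qed
  then show ?thesis using hp_the P by metis
qed

end
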